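(* For every $n\ge0$, the simplex $\mathbf{\Delta}^n$ is fibrant in the Thomason model structure on $\mathbf{Cpx}$, i.e. $\mathrm{Ex}^2\mathrm{Sing}(\mathbf{\Delta}^n)$ is a Kan complex.
   Context: A simplicial complex consists of a vertex set and a collection of nonempty finite subsets (simplices) containing all singletons and closed under nonempty subsets; maps are vertex functions preserving simplices; $\mathbf{Cpx}$ is the category. $\mathbf{\Delta}^n$ is the complex on $\{0,\dots,n\}$ in which every nonempty subset is a simplex. $\mathrm{Sing}(K)_n=\mathbf{Cpx}(\mathbf{\Delta}^n,K)$ with simplicial operators by precomposition; $\mathrm{Ex}$ is the right adjoint of barycentric subdivision of simplicial sets. In the Thomason model structure on $\mathbf{Cpx}$ a map $f$ is a fibration iff $\mathrm{Ex}^2\mathrm{Sing}(f)$ is a Kan fibration. *)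

theory Defs
  imports "HOL-Library.FuncSet"
begin

record 'v cpx =
  cverts :: "'v set"
  csimps :: "'v set set"

definition is_cpx :: "'v cpx \<Rightarrow> bool" where
  "is_cpx K \<longleftrightarrow>
     (\<forall>s\<in>csimps K. s \<noteq> {} \<and> finite s \<and> s \<subseteq> cverts K) \<and>
     (\<forall>v\<in>cverts K. {v} \<in> csimps K) \<and>
     (\<forall>s\<in>csimps K. \<forall>t. t \<noteq> {} \<and> t \<subseteq> s \<longrightarrow> t \<in> csimps K)"

definition cpx_map :: "'v cpx \<Rightarrow> 'w cpx \<Rightarrow> ('v \<Rightarrow> 'w) \<Rightarrow> bool" where
  "cpx_map K L f \<longleftrightarrow>
     (\<forall>v\<in>cverts K. f v \<in> cverts L) \<and> (\<forall>s\<in>csimps K. f ` s \<in> csimps L)"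

definition Delta_cpx :: "nat \<Rightarrow> nat cpx" where
  "Delta_cpx n = \<lparr> cverts = {0..n}, csimps = {s. s \<noteq> {} \<and> s \<subseteq> {0..n}} \<rparr>"

text \<open>A simplicial set is given by its sets of \<open>n\<close>-simplices \<open>sobj X n\<close> and its
simplicial operators: for a monotone map \<open>\<theta> : [m] \<rightarrow> [n]\<close>,
\<open>sop X m n \<theta>\<close> maps \<open>n\<close>-simplices to \<open>m\<close>-simplices.\<close>

record 'a sset =
  sobj :: "nat \<Rightarrow> 'a set"
  sop  :: "nat \<Rightarrow> nat \<Rightarrow> (nat \<Rightarrow> nat) \<Rightarrow> 'a \<Rightarrow> 'a"

definition mono_op :: "nat \<Rightarrow> nat \<Rightarrow> (nat \<Rightarrow> nat) \<Rightarrow> bool" where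
  "mono_op m n \<theta> \<longleftrightarrow> (\<forall>i\<le>m. \<theta> i \<le> n) \<and> (\<forall>i j. i \<le> j \<and> j \<le> m \<longrightarrow> \<theta> i \<le> \<theta> j)"

definition coface :: "nat \<Rightarrow> nat \<Rightarrow> nat" where
  "coface i j = (if j < i then j else Suc j)"

definition face :: "'a sset \<Rightarrow> nat \<Rightarrow> nat \<Rightarrow> 'a \<Rightarrow> 'a" where
  "face X n i x = sop X (n - 1) n (coface i) x"

text \<open>Kan complex: every horn \<open>\<Lambda>^n_k \<rightarrow> X\<close> (given as a compatible family of
\<open>(n-1)\<close>-simplices \<open>y i\<close>, \<open>i \<noteq> k\<close>) extends to an \<open>n\<close>-simplex.\<close>
definition kan_complex :: "'a sset \<Rightarrow> bool" where
  "kan_complex X \<longleftrightarrow>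
    (\<forall>n k (y :: nat \<Rightarrow> 'a). 1 \<le> n \<and> k \<le> n \<and>
       (\<forall>i\<le>n. i \<noteq> k \<longrightarrow> y i \<in> sobj X (n - 1)) \<and>
       (\<forall>i j. i < j \<and> j \<le> n \<and> i \<noteq> k \<and> j \<noteq> k \<longrightarrow>
              face X (n - 1) i (y j) = face X (n - 1) (j - 1) (y i))
     \<longrightarrow> (\<exists>x\<in>sobj X n. \<forall>i\<le>n. i \<noteq> k \<longrightarrow> face X n i x = y i))"

definition Sing :: "'v cpx \<Rightarrow> (nat \<Rightarrow> 'v) sset" where
  "Sing K = \<lparr> sobj = (\<lambda>n. {\<sigma>. \<sigma> \<in> extensional {0..n} \<and> cpx_map (Delta_cpx n) K \<sigma>}),
              sop = (\<lambda>m n \<theta> \<sigma>. restrict (\<sigma> \<circ> \<theta>) {0..m}) \<rparr>"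

text \<open>The \<open>k\<close>-simplices of \<open>sd \<Delta>^n\<close>, the nerve of the poset of nonempty subsets
of \<open>{0..n}\<close>: chains \<open>c 0 \<subseteq> \<dots> \<subseteq> c k\<close> (extended by \<open>{}\<close> beyond \<open>k\<close>).\<close>
definition sd_simp :: "nat \<Rightarrow> nat \<Rightarrow> (nat \<Rightarrow> nat set) set" where
  "sd_simp n k = {c. (\<forall>i\<le>k. c i \<noteq> {} \<and> c i \<subseteq> {0..n}) \<and>
                     (\<forall>i j. i \<le> j \<and> j \<le> k \<longrightarrow> c i \<subseteq> c j) \<and>
                     (\<forall>i>k. c i = {})}"

definition sd_op :: "nat \<Rightarrow> (nat \<Rightarrow> nat) \<Rightarrow> (nat \<Rightarrow> nat set) \<Rightarrow> (nat \<Rightarrow> nat set)" where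
  "sd_op m \<theta> c = (\<lambda>i. if i \<le> m then c (\<theta> i) else {})"

text \<open>\<open>sd\<close> applied to \<open>\<theta> : \<Delta>^m \<rightarrow> \<Delta>^n\<close>, on \<open>k\<close>-simplices: take images.\<close>
definition sd_map :: "nat \<Rightarrow> (nat \<Rightarrow> nat) \<Rightarrow> (nat \<Rightarrow> nat set) \<Rightarrow> (nat \<Rightarrow> nat set)" where
  "sd_map k \<theta> c = (\<lambda>i. if i \<le> k then \<theta> ` c i else {})"

definition sd_hom :: "nat \<Rightarrow> 'a sset \<Rightarrow> (nat \<Rightarrow> (nat \<Rightarrow> nat set) \<Rightarrow> 'a) set" where
  "sd_hom n X = {f. (\<forall>k c. c \<in> sd_simp n k \<longrightarrow> f k c \<in> sobj X k) \<and>
                    (\<forall>k c. c \<notin> sd_simp n k \<longrightarrow> f k c = undefined) \<and>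
                    (\<forall>m k \<theta> c. mono_op m k \<theta> \<and> c \<in> sd_simp n k \<longrightarrow>
                        f m (sd_op m \<theta> c) = sop X m k \<theta> (f k c))}"

text \<open>\<open>Ex X\<close>: \<open>(Ex X)_n = sSet(sd \<Delta>^n, X)\<close>, operators by precomposition with \<open>sd \<theta>\<close>.\<close>
definition Ex :: "'a sset \<Rightarrow> (nat \<Rightarrow> (nat \<Rightarrow> nat set) \<Rightarrow> 'a) sset" where
  "Ex X = \<lparr> sobj = (\<lambda>n. sd_hom n X),
            sop = (\<lambda>m n \<theta> f. (\<lambda>k c. if c \<in> sd_simp m k then f k (sd_map k \<theta> c) else undefined)) \<rparr>"

end

theory Submission imports Defs begin

definition chain0 :: "nat set \<Rightarrow> nat \<Rightarrow> nat set" where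
  "chain0 A = (\<lambda>i. if i = 0 then A else {})"

definition pre :: "nat \<Rightarrow> (nat \<Rightarrow> nat set) \<Rightarrow> nat \<Rightarrow> nat set" where
  "pre i c = (\<lambda>a. {v. coface i v \<in> c a})"

lemma sobj_Ex[simp]: "sobj (Ex X) n = sd_hom n X"
  by (simp add: Ex_def)

lemma sop_Ex[simp]: "sop (Ex X) m n \<theta> f =
   (\<lambda>k c. if c \<in> sd_simp m k then f k (sd_map k \<theta> c) else undefined)"
  by (simp add: Ex_def)

lemma sobj_Sing: "sobj (Sing (Delta_cpx N)) j = {\<sigma>. \<sigma> \<in> extensional {0..j} \<and> (\<forall>i\<le>j. \<sigma> i \<le> N)}"
  unfolding Sing_def cpx_map_def Delta_cpx_def by auto

lemma sop_Sing[simp]: "sop (Sing K) m n \<theta> \<sigma> = restrict (\<sigma> \<circ> \<theta>) {0..m}"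
  by (simp add: Sing_def)

lemma sd_op_simp: "mono_op m k \<theta> \<Longrightarrow> c \<in> sd_simp n k \<Longrightarrow> sd_op m \<theta> c \<in> sd_simp n m"
  unfolding sd_simp_def sd_op_def mono_op_def by auto

lemma sd_map_simp: "(\<forall>i\<le>m. \<theta> i \<le> n) \<Longrightarrow> c \<in> sd_simp m k \<Longrightarrow> sd_map k \<theta> c \<in> sd_simp n k"
  unfolding sd_simp_def sd_map_def by (auto simp: image_mono) (meson atLeastAtMost_iff subset_iff)+

lemma chain0_simp: "A \<noteq> {} \<Longrightarrow> A \<subseteq> {0..k} \<Longrightarrow> chain0 A \<in> sd_simp k 0"
  unfolding sd_simp_def chain0_def by auto

lemma sd_op_0: "sd_op 0 \<theta> d = chain0 (d (\<theta> 0))"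
  unfolding sd_op_def chain0_def by (rule ext) auto

lemma sd_map_chain0: "sd_map 0 \<theta> (chain0 A) = chain0 (\<theta> ` A)"
  unfolding sd_map_def chain0_def by (rule ext) auto

lemma INN:
  assumes "g \<in> sd_hom k (Sing D)" "d \<in> sd_simp k j" "l \<le> j"
  shows "g j d l = g 0 (chain0 (d l)) 0"
proof -
  have "mono_op 0 j (\<lambda>_. l)" using assms(3) unfolding mono_op_def by auto
  then have "g 0 (sd_op 0 (\<lambda>_. l) d) = sop (Sing D) 0 j (\<lambda>_. l) (g j d)"
    using assms(1,2) unfolding sd_hom_def by blast
  then show ?thesis by (simp add: sd_op_0)
qed

lemma retract:
  assumes "A \<subseteq> {0..k}" "A \<noteq> {}"
  shows "\<exists>\<rho>. mono_op k k \<rho> \<and> (\<forall>a\<in>A. \<rho> a = a) \<and> (\<forall>a. \<rho> a \<in> A)"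
proof -
  have fin: "finite A" using assms(1) finite_subset by blast
  define \<rho> where "\<rho> a = (if \<exists>b\<in>A. a \<le> b then LEAST b. b \<in> A \<and> a \<le> b else Max A)" for a
  have L: "\<rho> a \<in> A \<and> a \<le> \<rho> a" if "\<exists>b\<in>A. a \<le> b" for a
  proof -
    from that obtain b where "b \<in> A \<and> a \<le> b" by blast
    then have "(LEAST b. b \<in> A \<and> a \<le> b) \<in> A \<and> a \<le> (LEAST b. b \<in> A \<and> a \<le> b)"
      by (rule LeastI)
    then show ?thesis using that unfolding \<rho>_def by simp
  qed
  have inA: "\<rho> a \<in> A" for a
  proof (cases "\<exists>b\<in>A. a \<le> b")
    case True
    then show ?thesis using L by blast
  next
    case False
    then have "\<rho> a = Max A" unfolding \<rho>_def by simp
    then show ?thesis using fin assms(2) Max_in by simp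
  qed
  have fx: "\<rho> a = a" if "a \<in> A" for a
  proof -
    have ex: "\<exists>b\<in>A. a \<le> b" using that by blast
    have "(LEAST b. b \<in> A \<and> a \<le> b) = a"
      by (rule Least_equality) (use that in auto)
    then show ?thesis unfolding \<rho>_def using ex by simp
  qed
  have mono: "\<rho> i \<le> \<rho> j" if "i \<le> j" for i j
  proof (cases "\<exists>b\<in>A. j \<le> b")
    case True
    have ex: "\<exists>b\<in>A. i \<le> b" using True that le_trans by blast
    have "\<rho> j \<in> A \<and> i \<le> \<rho> j" using L[OF True] that by simp
    then have "(LEAST b. b \<in> A \<and> i \<le> b) \<le> \<rho> j" by (rule Least_le)
    then show ?thesis unfolding \<rho>_def[of i] using ex by simp
  next
    case False
    then have "\<rho> j = Max A" unfolding \<rho>_def by simp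
    then show ?thesis using inA[of i] fin by simp
  qed
  have "\<forall>i\<le>k. \<rho> i \<le> k" using inA assms(1) by (meson atLeastAtMost_iff subsetD)
  then have "mono_op k k \<rho>" unfolding mono_op_def using mono by blast
  then show ?thesis using fx inA by blast
qed

lemma INV:
  assumes f: "f \<in> sd_hom n' (Ex (Sing D))" and c1: "c1 \<in> sd_simp n' k" and c2: "c2 \<in> sd_simp n' k"
    and A: "A \<subseteq> {0..k}" "A \<noteq> {}" and eq: "\<forall>a\<in>A. c1 a = c2 a"
  shows "f k c1 0 (chain0 A) 0 = f k c2 0 (chain0 A) 0"
proof -
  obtain \<rho> where \<rho>: "mono_op k k \<rho>" "\<forall>a\<in>A. \<rho> a = a" "\<forall>a. \<rho> a \<in> A"
    using retract[OF A] by blast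
  have imgA: "\<rho> ` A = A" using \<rho>(2) by force
  have key: "f k (sd_op k \<rho> c) 0 (chain0 A) 0 = f k c 0 (chain0 A) 0" if "c \<in> sd_simp n' k" for c
  proof -
    have "f k (sd_op k \<rho> c) = sop (Ex (Sing D)) k k \<rho> (f k c)"
      using f that \<rho>(1) unfolding sd_hom_def by blast
    then show ?thesis using chain0_simp[OF A(2,1)] by (simp add: sd_map_chain0 imgA)
  qed
  have "sd_op k \<rho> c1 = sd_op k \<rho> c2"
    unfolding sd_op_def using eq \<rho>(3) by (intro ext) simp
  then show ?thesis using key[OF c1] key[OF c2] by simp
qed

lemma cof_inj: "coface i v = coface i w \<Longrightarrow> v = w"
  unfolding coface_def by (auto split: if_splits)

lemma cof_ne: "coface i v \<noteq> i"
  unfolding coface_def by auto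

lemma cof_surj: "w \<noteq> i \<Longrightarrow> \<exists>v. coface i v = w"
  unfolding coface_def by (rule exI[of _ "if w < i then w else w - 1"]) auto

lemma cof_comm: "i < i' \<Longrightarrow> coface i' (coface i v) = coface i (coface (i' - 1) v)"
  unfolding coface_def by auto

lemma cof_bound: "i \<le> n \<Longrightarrow> coface i v \<le> n \<Longrightarrow> v \<le> n - 1"
  unfolding coface_def by (auto split: if_splits)

lemma cof_bound2: "1 \<le> n \<Longrightarrow> i \<le> n \<Longrightarrow> v \<le> n - 1 \<Longrightarrow> coface i v \<le> n"
  unfolding coface_def by auto

lemma pre_simp:
  assumes c: "c \<in> sd_simp n k" and i: "i \<le> n" and ni: "i \<notin> c 0"
  shows "pre i c \<in> sd_simp (n - 1) k"
proof -
  have ne: "pre i c a \<noteq> {}" if "a \<le> k" for a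
  proof -
    obtain v where v: "v \<in> c 0" using c unfolding sd_simp_def by blast
    then have "v \<noteq> i" using ni by auto
    then obtain w where w: "coface i w = v" using cof_surj by blast
    have "c 0 \<subseteq> c a" using c that unfolding sd_simp_def by auto
    then show ?thesis using v w unfolding pre_def by auto
  qed
  have sub: "pre i c a \<subseteq> {0..n-1}" if "a \<le> k" for a
  proof
    fix w assume "w \<in> pre i c a"
    then have "coface i w \<in> c a" unfolding pre_def by auto
    moreover have "c a \<subseteq> {0..n}" using c that unfolding sd_simp_def by blast
    ultimately have "coface i w \<le> n" by auto
    then show "w \<in> {0..n-1}" using cof_bound[OF i] by auto
  qed
  have mono: "pre i c a \<subseteq> pre i c b" if "a \<le> b" "b \<le> k" for a b
  proof -
    have "c a \<subseteq> c b" using c that unfolding sd_simp_def by blast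
    then show ?thesis unfolding pre_def by auto
  qed
  have emp: "pre i c a = {}" if "a > k" for a
    using c that unfolding sd_simp_def pre_def by auto
  show ?thesis unfolding sd_simp_def using ne sub mono emp by auto
qed

lemma pre_image:
  assumes "c \<in> sd_simp m k"
  shows "pre i (sd_map k (coface i) c) = c"
proof
  fix a
  show "pre i (sd_map k (coface i) c) a = c a"
  proof (cases "a \<le> k")
    case True
    then show ?thesis unfolding pre_def sd_map_def using cof_inj by auto
  next
    case False
    then show ?thesis using assms unfolding pre_def sd_map_def sd_simp_def by auto
  qed
qed

locale hornctx =
  fixes N n K :: nat
    and y :: "nat \<Rightarrow> nat \<Rightarrow> (nat \<Rightarrow> nat set) \<Rightarrow> nat \<Rightarrow> (nat \<Rightarrow> nat set) \<Rightarrow> nat \<Rightarrow> nat"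
  assumes n1: "1 \<le> n" and Kn: "K \<le> n"
    and ymem: "\<And>i. i \<le> n \<Longrightarrow> i \<noteq> K \<Longrightarrow> y i \<in> sd_hom (n - 1) (Ex (Sing (Delta_cpx N)))"
    and ycomp: "\<And>i j. i < j \<Longrightarrow> j \<le> n \<Longrightarrow> i \<noteq> K \<Longrightarrow> j \<noteq> K \<Longrightarrow>
       face (Ex (Ex (Sing (Delta_cpx N)))) (n - 1) i (y j) = face (Ex (Ex (Sing (Delta_cpx N)))) (n - 1) (j - 1) (y i)"
begin

definition good :: "(nat \<Rightarrow> nat set) \<Rightarrow> nat set \<Rightarrow> nat \<Rightarrow> bool" where
  "good c A i \<longleftrightarrow> i \<le> n \<and> i \<noteq> K \<and> i \<notin> c (Max A)"

definition V :: "nat \<Rightarrow> (nat \<Rightarrow> nat set) \<Rightarrow> nat set \<Rightarrow> nat" where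
  "V k c A = (if \<exists>i. good c A i
     then y (LEAST i. good c A i) k (pre (LEAST i. good c A i) c) 0 (chain0 A) 0 else 0)"

definition xf :: "nat \<Rightarrow> (nat \<Rightarrow> nat set) \<Rightarrow> nat \<Rightarrow> (nat \<Rightarrow> nat set) \<Rightarrow> nat \<Rightarrow> nat" where
  "xf = (\<lambda>k c. if c \<in> sd_simp n k then (\<lambda>j d. if d \<in> sd_simp k j
          then (\<lambda>l. if l \<le> j then V k c (d l) else undefined) else undefined) else undefined)"

lemma good_pre:
  assumes g: "good c A i" and c: "c \<in> sd_simp n k" and A: "A \<subseteq> {0..k}" "A \<noteq> {}"
  shows "pre i c \<in> sd_simp (n - 1) k"
proof -
  have fin: "finite A" using A(1) finite_subset by blast
  have "Max A \<in> A" using fin A(2) by simp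
  then have "Max A \<le> k" using A(1) by auto
  then have "c 0 \<subseteq> c (Max A)" using c unfolding sd_simp_def by blast
  then have "i \<notin> c 0" using g unfolding good_def by blast
  then show ?thesis using pre_simp[OF c] g unfolding good_def by blast
qed

lemma ymem': "i \<le> n \<Longrightarrow> i \<noteq> K \<Longrightarrow> c \<in> sd_simp (n - 1) k \<Longrightarrow> A \<subseteq> {0..k} \<Longrightarrow> A \<noteq> {}
   \<Longrightarrow> y i k c 0 (chain0 A) 0 \<le> N"
proof -
  assume a: "i \<le> n" "i \<noteq> K" "c \<in> sd_simp (n - 1) k" "A \<subseteq> {0..k}" "A \<noteq> {}"
  have "y i k c \<in> sobj (Ex (Sing (Delta_cpx N))) k" using ymem[OF a(1,2)] a(3) unfolding sd_hom_def by blast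
  then have "y i k c \<in> sd_hom k (Sing (Delta_cpx N))" by simp
  then have "y i k c 0 (chain0 A) \<in> sobj (Sing (Delta_cpx N)) 0"
    using chain0_simp[OF a(5,4)] unfolding sd_hom_def by blast
  then show ?thesis unfolding sobj_Sing by simp
qed

lemma VN:
  assumes c: "c \<in> sd_simp n k" and A: "A \<subseteq> {0..k}" "A \<noteq> {}"
  shows "V k c A \<le> N"
proof (cases "\<exists>i. good c A i")
  case True
  define i where "i = (LEAST i. good c A i)"
  have g: "good c A i" unfolding i_def using True by (metis LeastI)
  have "V k c A = y i k (pre i c) 0 (chain0 A) 0" unfolding V_def i_def using True by simp
  also have "\<dots> \<le> N" using ymem'[OF _ _ good_pre[OF g c A] A] g unfolding good_def by blast
  finally show ?thesis .
next
  case False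
  then have "V k c A = 0" unfolding V_def by auto
  then show ?thesis by simp
qed

lemma VNAT:
  assumes th: "mono_op m k \<theta>" and c: "c \<in> sd_simp n k" and A: "A \<subseteq> {0..m}" "A \<noteq> {}"
  shows "V m (sd_op m \<theta> c) A = V k c (\<theta> ` A)"
proof -
  have fin: "finite A" using A(1) finite_subset by blast
  define MA where "MA = Max A"
  have MA: "MA \<in> A" "MA \<le> m" using fin A unfolding MA_def by auto
  have hMax: "Max (\<theta> ` A) = \<theta> MA"
  proof (rule Max_eqI)
    show "finite (\<theta> ` A)" using fin by simp
    show "\<theta> MA \<in> \<theta> ` A" using MA by simp
    fix b assume "b \<in> \<theta> ` A"
    then obtain a where a: "a \<in> A" "b = \<theta> a" by blast
    have "a \<le> MA" using fin a(1) unfolding MA_def by simp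
    then show "b \<le> \<theta> MA" using a th MA(2) unfolding mono_op_def by blast
  qed
  have hc: "sd_op m \<theta> c MA = c (\<theta> MA)" using MA(2) unfolding sd_op_def by simp
  have hgood: "good (sd_op m \<theta> c) A = good c (\<theta> ` A)"
    by (intro ext) (simp add: good_def hMax hc flip: MA_def)
  have thA: "\<theta> ` A \<subseteq> {0..k}" "\<theta> ` A \<noteq> {}" using A th unfolding mono_op_def by auto
  show ?thesis
  proof (cases "\<exists>i. good c (\<theta> ` A) i")
    case True
    define L where "L = (LEAST i. good c (\<theta> ` A) i)"
    have g: "good c (\<theta> ` A) L" unfolding L_def using True by (metis LeastI)
    have L: "L \<le> n" "L \<noteq> K" using g unfolding good_def by auto
    have p: "pre L c \<in> sd_simp (n - 1) k" using good_pre[OF g c thA] .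
    have pe: "pre L (sd_op m \<theta> c) = sd_op m \<theta> (pre L c)"
      unfolding pre_def sd_op_def by (intro ext) simp
    have nat: "y L m (sd_op m \<theta> (pre L c)) = sop (Ex (Sing (Delta_cpx N))) m k \<theta> (y L k (pre L c))"
      using ymem[OF L] p th unfolding sd_hom_def by blast
    have "V m (sd_op m \<theta> c) A = y L m (pre L (sd_op m \<theta> c)) 0 (chain0 A) 0"
      unfolding V_def hgood L_def using True by simp
    also have "\<dots> = y L k (pre L c) 0 (chain0 (\<theta> ` A)) 0"
      unfolding pe nat using chain0_simp[OF A(2,1)] by (simp add: sd_map_chain0)
    also have "\<dots> = V k c (\<theta> ` A)"
      unfolding V_def L_def using True by simp
    finally show ?thesis .
  next
    case False
    then show ?thesis unfolding V_def hgood by auto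
  qed
qed

lemma xf_mem: "xf \<in> sd_hom n (Ex (Sing (Delta_cpx N)))"
proof -
  let ?S = "Sing (Delta_cpx N)"
  have inner: "xf k c \<in> sd_hom k ?S" if c: "c \<in> sd_simp n k" for k c
  proof -
    have xkc: "xf k c = (\<lambda>j d. if d \<in> sd_simp k j
          then (\<lambda>l. if l \<le> j then V k c (d l) else undefined) else undefined)"
      unfolding xf_def using c by simp
    have dA: "d l \<subseteq> {0..k}" "d l \<noteq> {}" if "d \<in> sd_simp k j" "l \<le> j" for d j l
      using that unfolding sd_simp_def by auto
    have 1: "xf k c j d \<in> sobj ?S j" if d: "d \<in> sd_simp k j" for j d
      unfolding sobj_Sing xkc using d VN[OF c dA[OF d]] by (auto simp: extensional_def)
    have 2: "xf k c j d = undefined" if "d \<notin> sd_simp k j" for j d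
      unfolding xkc using that by simp
    have 3: "xf k c m (sd_op m \<theta> d) = sop ?S m j \<theta> (xf k c j d)"
      if th: "mono_op m j \<theta>" and d: "d \<in> sd_simp k j" for m j \<theta> d
    proof -
      have d': "sd_op m \<theta> d \<in> sd_simp k m" using sd_op_simp[OF th d] .
      have tb: "\<theta> l \<le> j" if "l \<le> m" for l using th that unfolding mono_op_def by blast
      show ?thesis unfolding sop_Sing xkc using d d' tb
        by (intro ext) (auto simp: sd_op_def)
    qed
    show ?thesis unfolding sd_hom_def using 1 2 3 by blast
  qed
  have outer: "xf m (sd_op m \<theta> c) = sop (Ex ?S) m k \<theta> (xf k c)"
    if th: "mono_op m k \<theta>" and c: "c \<in> sd_simp n k" for m k \<theta> c
  proof (rule ext, rule ext)
    fix j d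
    have c': "sd_op m \<theta> c \<in> sd_simp n m" using sd_op_simp[OF th c] .
    have tb: "\<forall>i\<le>m. \<theta> i \<le> k" using th unfolding mono_op_def by blast
    show "xf m (sd_op m \<theta> c) j d = sop (Ex ?S) m k \<theta> (xf k c) j d"
    proof (cases "d \<in> sd_simp m j")
      case False
      then show ?thesis unfolding xf_def using c' by simp
    next
      case True
      have d': "sd_map j \<theta> d \<in> sd_simp k j" using sd_map_simp[OF tb True] .
      have dA: "d l \<subseteq> {0..m}" "d l \<noteq> {}" if "l \<le> j" for l
        using True that unfolding sd_simp_def by auto
      show ?thesis unfolding xf_def using True c c' d'
        by (intro ext) (auto simp: VNAT[OF th c dA] sd_map_def)
    qed
  qed
  have none: "xf k c = undefined" if "c \<notin> sd_simp n k" for k c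
    unfolding xf_def using that by simp
  show ?thesis unfolding sd_hom_def[of n "Ex ?S"] sobj_Ex using inner outer none by blast
qed

lemma COMP_lt:
  assumes lt: "i < i'" and gi: "good c A i" and gi': "good c A i'"
    and c: "c \<in> sd_simp n k" and A: "A \<subseteq> {0..k}" "A \<noteq> {}"
  shows "y i k (pre i c) 0 (chain0 A) 0 = y i' k (pre i' c) 0 (chain0 A) 0"
proof -
  let ?S = "Sing (Delta_cpx N)"
  have fin: "finite A" using A(1) finite_subset by blast
  define MA where "MA = Max A"
  have MA: "MA \<in> A" "MA \<le> k" using fin A unfolding MA_def by auto
  obtain \<rho> where \<rho>: "mono_op k k \<rho>" "\<forall>a\<in>A. \<rho> a = a" "\<forall>a. \<rho> a \<in> A"
    using retract[OF A] by blast
  define c0 where "c0 = sd_op k \<rho> c"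
  have c0s: "c0 \<in> sd_simp n k" unfolding c0_def using sd_op_simp[OF \<rho>(1) c] .
  have c0sub: "c0 a \<subseteq> c MA" for a
  proof (cases "a \<le> k")
    case True
    have "\<rho> a \<le> MA" using \<rho>(3) fin unfolding MA_def by simp
    then have "c (\<rho> a) \<subseteq> c MA" using c MA(2) unfolding sd_simp_def by blast
    then show ?thesis unfolding c0_def sd_op_def using True by simp
  next
    case False
    then show ?thesis unfolding c0_def sd_op_def by simp
  qed
  have gg: "i \<le> n" "i \<noteq> K" "i \<notin> c MA" "i' \<le> n" "i' \<noteq> K" "i' \<notin> c MA"
    using gi gi' unfolding good_def MA_def by auto
  have ni: "i \<notin> c0 a" "i' \<notin> c0 a" for a using c0sub[of a] gg by auto
  have agree: "c0 a = c a" if "a \<in> A" for a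
    using that \<rho>(2) A(1) unfolding c0_def sd_op_def by auto
  have red: "y j k (pre j c) 0 (chain0 A) 0 = y j k (pre j c0) 0 (chain0 A) 0"
    if gj: "good c A j" and nj: "j \<notin> c0 0" for j
  proof -
    have j: "j \<le> n" "j \<noteq> K" using gj unfolding good_def by auto
    show ?thesis
    proof (rule INV[OF ymem[OF j]])
      show "pre j c \<in> sd_simp (n - 1) k" using good_pre[OF gj c A] .
      show "pre j c0 \<in> sd_simp (n - 1) k" using pre_simp[OF c0s j(1) nj] .
      show "\<forall>a\<in>A. pre j c a = pre j c0 a" using agree unfolding pre_def by auto
    qed (use A in auto)
  qed
  define E where "E = pre i (pre i' c0)"
  have p1: "pre i' c0 \<in> sd_simp (n - 1) k" using pre_simp[OF c0s gg(4) ni(2)] .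
  have cii: "coface i' i = i" using lt unfolding coface_def by simp
  have "i \<notin> pre i' c0 0" unfolding pre_def using cii ni(1) by simp
  then have Es: "E \<in> sd_simp (n - 1 - 1) k" unfolding E_def using pre_simp[OF p1] lt gg(4) by simp
  have Ea: "E a = {v. coface i' (coface i v) \<in> c0 a}" for a unfolding E_def pre_def by simp
  have h1: "pre i' c0 = sd_map k (coface i) E"
  proof (rule ext)
    fix a
    show "pre i' c0 a = sd_map k (coface i) E a"
    proof (cases "a \<le> k")
      case True
      have "{w. coface i' w \<in> c0 a} = coface i ` {v. coface i' (coface i v) \<in> c0 a}"
      proof
        show "{w. coface i' w \<in> c0 a} \<subseteq> coface i ` {v. coface i' (coface i v) \<in> c0 a}"
        proof
          fix w assume w: "w \<in> {w. coface i' w \<in> c0 a}"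
          then have "w \<noteq> i" using cii ni(1)[of a] by auto
          then obtain v where v: "coface i v = w" using cof_surj by blast
          then show "w \<in> coface i ` {v. coface i' (coface i v) \<in> c0 a}" using w by auto
        qed
      qed auto
      then show ?thesis unfolding pre_def[of _ c0] sd_map_def Ea using True by simp
    next
      case False
      then have "c0 a = {}" using c0s unfolding sd_simp_def by simp
      then show ?thesis unfolding pre_def sd_map_def using False by simp
    qed
  qed
  have cii2: "coface i (i' - 1) = i'" using lt unfolding coface_def by auto
  have h2: "pre i c0 = sd_map k (coface (i' - 1)) E"
  proof (rule ext)
    fix a
    show "pre i c0 a = sd_map k (coface (i' - 1)) E a"
    proof (cases "a \<le> k")
      case True
      have "{w. coface i w \<in> c0 a} = coface (i' - 1) ` {v. coface i' (coface i v) \<in> c0 a}"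
      proof
        show "{w. coface i w \<in> c0 a} \<subseteq> coface (i' - 1) ` {v. coface i' (coface i v) \<in> c0 a}"
        proof
          fix w assume w: "w \<in> {w. coface i w \<in> c0 a}"
          then have "w \<noteq> i' - 1" using cii2 ni(2)[of a] by auto
          then obtain v where v: "coface (i' - 1) v = w" using cof_surj by blast
          then have "coface i' (coface i v) \<in> c0 a" using w cof_comm[OF lt] by auto
          then show "w \<in> coface (i' - 1) ` {v. coface i' (coface i v) \<in> c0 a}" using v by auto
        qed
        show "coface (i' - 1) ` {v. coface i' (coface i v) \<in> c0 a} \<subseteq> {w. coface i w \<in> c0 a}"
          using cof_comm[OF lt] by auto
      qed
      then show ?thesis unfolding pre_def[of _ c0] sd_map_def Ea using True by simp
    next
      case False
      then have "c0 a = {}" using c0s unfolding sd_simp_def by simp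
      then show ?thesis unfolding pre_def sd_map_def using False by simp
    qed
  qed
  have yc: "face (Ex (Ex ?S)) (n - 1) i (y i') = face (Ex (Ex ?S)) (n - 1) (i' - 1) (y i)"
    using ycomp[OF lt gg(4) gg(2) gg(5)] .
  have "y i' k (sd_map k (coface i) E) = y i k (sd_map k (coface (i' - 1)) E)"
    using fun_cong[OF fun_cong[OF yc, of k], of E] Es unfolding face_def by simp
  then have "y i k (pre i c0) = y i' k (pre i' c0)" using h1 h2 by simp
  moreover have "i \<notin> c0 0" "i' \<notin> c0 0" using ni by auto
  ultimately show ?thesis using red[OF gi] red[OF gi'] by simp
qed

lemma COMP:
  assumes gi: "good c A i" and gi': "good c A i'"
    and c: "c \<in> sd_simp n k" and A: "A \<subseteq> {0..k}" "A \<noteq> {}"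
  shows "y i k (pre i c) 0 (chain0 A) 0 = y i' k (pre i' c) 0 (chain0 A) 0"
proof -
  consider "i < i'" | "i = i'" | "i' < i" by linarith
  then show ?thesis
  proof cases
    case 1 show ?thesis by (rule COMP_lt[OF 1 gi gi' c A])
  next
    case 2 then show ?thesis by simp
  next
    case 3 show ?thesis using COMP_lt[OF 3 gi' gi c A] by simp
  qed
qed

lemma V_face:
  assumes c: "c \<in> sd_simp (n - 1) k" and A: "A \<subseteq> {0..k}" "A \<noteq> {}" and i: "i \<le> n" "i \<noteq> K"
  shows "V k (sd_map k (coface i) c) A = y i k c 0 (chain0 A) 0"
proof -
  define c'' where "c'' = sd_map k (coface i) c"
  have tb: "\<forall>v\<le>n - 1. coface i v \<le> n" using cof_bound2[OF n1 i(1)] by blast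
  have c''s: "c'' \<in> sd_simp n k" unfolding c''_def using sd_map_simp[OF tb c] .
  have nim: "i \<notin> coface i ` X" for X using cof_ne by (metis imageE)
  have gi: "good c'' A i" unfolding good_def c''_def sd_map_def using i nim by auto
  then have ex: "\<exists>j. good c'' A j" by blast
  define L where "L = (LEAST j. good c'' A j)"
  have gL: "good c'' A L" unfolding L_def using ex by (metis LeastI)
  have "V k c'' A = y L k (pre L c'') 0 (chain0 A) 0" unfolding V_def L_def using ex by simp
  also have "\<dots> = y i k (pre i c'') 0 (chain0 A) 0" using COMP[OF gL gi c''s A] .
  also have "pre i c'' = c" unfolding c''_def using pre_image[OF c] .
  finally show ?thesis unfolding c''_def .
qed

lemma xf_face:
  assumes i: "i \<le> n" "i \<noteq> K"
  shows "face (Ex (Ex (Sing (Delta_cpx N)))) n i xf = y i"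
proof (rule ext, rule ext)
  let ?S = "Sing (Delta_cpx N)"
  fix k c
  have yi: "y i \<in> sd_hom (n - 1) (Ex ?S)" using ymem[OF i] .
  show "face (Ex (Ex ?S)) n i xf k c = y i k c"
  proof (cases "c \<in> sd_simp (n - 1) k")
    case False
    then have "y i k c = undefined" using yi unfolding sd_hom_def by blast
    then show ?thesis using False unfolding face_def by simp
  next
    case True
    define c'' where "c'' = sd_map k (coface i) c"
    have tb: "\<forall>v\<le>n - 1. coface i v \<le> n" using cof_bound2[OF n1 i(1)] by blast
    have c''s: "c'' \<in> sd_simp n k" unfolding c''_def using sd_map_simp[OF tb True] .
    have "y i k c \<in> sobj (Ex ?S) k" using yi True unfolding sd_hom_def[of "n - 1"] by blast
    then have yk: "y i k c \<in> sd_hom k ?S" by simp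
    have lhs: "face (Ex (Ex ?S)) n i xf k c = xf k c''"
      unfolding face_def c''_def using True by simp
    have "xf k c'' = y i k c"
    proof (rule ext, rule ext)
      fix j d
      show "xf k c'' j d = y i k c j d"
      proof (cases "d \<in> sd_simp k j")
        case False
        then have "y i k c j d = undefined" using yk unfolding sd_hom_def by blast
        then show ?thesis unfolding xf_def using c''s False by simp
      next
        case True
        have mem: "y i k c j d \<in> sobj ?S j" using yk True unfolding sd_hom_def by blast
        show ?thesis
        proof (rule ext)
          fix l
          show "xf k c'' j d l = y i k c j d l"
          proof (cases "l \<le> j")
            case True2: True
            have dA: "d l \<subseteq> {0..k}" "d l \<noteq> {}" using True True2 unfolding sd_simp_def by auto
            have "xf k c'' j d l = V k c'' (d l)" unfolding xf_def using c''s True True2 by simp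
            also have "\<dots> = y i k c 0 (chain0 (d l)) 0"
              unfolding c''_def using V_face[OF \<open>c \<in> sd_simp (n - 1) k\<close> dA i] .
            also have "\<dots> = y i k c j d l" using INN[OF yk True True2] by simp
            finally show ?thesis .
          next
            case False
            then have "y i k c j d l = undefined" using mem unfolding sobj_Sing extensional_def by auto
            then show ?thesis unfolding xf_def using c''s True False by simp
          qed
        qed
      qed
    qed
    then show ?thesis using lhs by simp
  qed
qed

end

theorem lemma6p2:
  fixes n :: nat
  shows "kan_complex (Ex (Ex (Sing (Delta_cpx n))))"
  unfolding kan_complex_def
proof (intro allI impI, elim conjE)
  fix m K y
  assume h1: "1 \<le> m" and h2: "K \<le> m"
    and h3: "\<forall>i\<le>m. i \<noteq> K \<longrightarrow> y i \<in> sobj (Ex (Ex (Sing (Delta_cpx n)))) (m - 1)"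
    and h4: "\<forall>i j. i < j \<and> j \<le> m \<and> i \<noteq> K \<and> j \<noteq> K \<longrightarrow>
       face (Ex (Ex (Sing (Delta_cpx n)))) (m - 1) i (y j) = face (Ex (Ex (Sing (Delta_cpx n)))) (m - 1) (j - 1) (y i)"
  interpret H: hornctx n m K y
    using h1 h2 h3 h4 by unfold_locales auto
  show "\<exists>x\<in>sobj (Ex (Ex (Sing (Delta_cpx n)))) m. \<forall>i\<le>m. i \<noteq> K \<longrightarrow> face (Ex (Ex (Sing (Delta_cpx n)))) m i x = y i"
    using H.xf_mem H.xf_face by auto
qed

end
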